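(* Let $X$ be a finite $T_0$ topological space and $\mathcal V$ a multivector field on $X$ with $X$ invariant. Let $S_1,S_2\subset X$ be isolated invariant sets. There exists a link $\gamma$ from $S_1$ to $S_2$ if and only if there exists a path $\rho:[a,b]\cap\mathbb Z\to X$ with $\rho(a)\in S_1$ and $\rho(b)\in S_2$.
   Context: Notation: $\operatorname{cl}$ is closure; $A\subset X$ is locally closed if $\operatorname{cl}A\setminus A$ is closed. A multivector field $\mathcal V$ on $X$ is a partition of $X$ into locally closed sets (multivectors); $[x]_{\mathcal V}$ is the multivector containing $x$. A multivector $V$ is critical if $H(\operatorname{cl}V,\operatorname{cl}V\setminus V)$ (relative singular homology) is nontrivial, regular otherwise. $A$ is $\mathcal V$-compatible if it is a union of multivectors; $\langle A\rangle_{\mathcal V}$ is the smallest locally closed $\mathcal V$-compatible set containing $A$. $\Pi_{\mathcal V}(x)=\operatorname{cl}\{x\}\cup[x]_{\mathcal V}$. A solution is a partial map $\gamma:\mathbb Z\nrightarrow X$ with domain an integer interval and $\gamma(t+1)\in\Pi_{\mathcal V}(\gamma(t))$ whenever $t,t+1\in\operatorname{dom}\gamma$; a path is a solution with finite domain; a full solution has domain $\mathbb Z$. $\alpha(\gamma)=\langle\bigcap_{t\le0}\gamma((-\infty,t])\rangle_{\mathcal V}$, $\omega(\gamma)=\langle\bigcap_{t\ge0}\gamma([t,\infty))\rangle_{\mathcal V}$. A full solution is essential unless $\alpha(\gamma)$ or $\omega(\gamma)$ lies in a single regular multivector. $\operatorname{Inv}S$ is the set of $x\in S$ with an essential solution $\gamma$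 with image in $S$ and $\gamma(0)=x$; $S$ is invariant if $\operatorname{Inv}S=S$. An invariant $S$ is isolated invariant if there is a closed $N\supset\Pi_{\mathcal V}(S)$ such that every path in $N$ with endpoints in $S$ has image in $S$. A link from $S_1$ to $S_2$ is a full solution $\gamma$ with $\alpha(\gamma)\cap S_1\ne\emptyset\ne\omega(\gamma)\cap S_2$. *)

theory Defs
  imports "HOL-Analysis.Analysis" "HOL-Homology.Homology"
begin

definition locally_closed :: "'a topology \<Rightarrow> 'a set \<Rightarrow> bool" where
  "locally_closed X A \<longleftrightarrow> A \<subseteq> topspace X \<and> closedin X (X closure_of A - A)"

definition multivector_field :: "'a topology \<Rightarrow> 'a set set \<Rightarrow> bool" where
  "multivector_field X V \<longleftrightarrow>
     \<Union>V = topspace X \<and> {} \<notin> V \<and> (\<forall>A\<in>V. \<forall>B\<in>V. A \<noteq> B \<longrightarrow> A \<inter> B = {}) \<and>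
     (\<forall>A\<in>V. locally_closed X A)"

definition mv_of :: "'a set set \<Rightarrow> 'a \<Rightarrow> 'a set" where
  "mv_of V x = (THE A. A \<in> V \<and> x \<in> A)"

definition critical :: "'a topology \<Rightarrow> 'a set \<Rightarrow> bool" where
  "critical X A \<longleftrightarrow>
     (\<exists>p. \<not> trivial_group
        (relative_homology_group p (subtopology X (X closure_of A)) (X closure_of A - A)))"

definition regular :: "'a topology \<Rightarrow> 'a set \<Rightarrow> bool" where
  "regular X A \<longleftrightarrow> \<not> critical X A"

definition compatible :: "'a set set \<Rightarrow> 'a set \<Rightarrow> bool" where
  "compatible V A \<longleftrightarrow> (\<exists>W\<subseteq>V. A = \<Union>W)"

text \<open>Smallest locally closed V-compatible set containing A (exists in finite T0 spaces).\<close>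
definition lc_hull :: "'a topology \<Rightarrow> 'a set set \<Rightarrow> 'a set \<Rightarrow> 'a set" where
  "lc_hull X V A = \<Inter>{B. locally_closed X B \<and> compatible V B \<and> A \<subseteq> B}"

definition Pi_mv :: "'a topology \<Rightarrow> 'a set set \<Rightarrow> 'a \<Rightarrow> 'a set" where
  "Pi_mv X V x = X closure_of {x} \<union> mv_of V x"

definition int_interval :: "int set \<Rightarrow> bool" where
  "int_interval I \<longleftrightarrow> (\<forall>a\<in>I. \<forall>c\<in>I. \<forall>b. a \<le> b \<and> b \<le> c \<longrightarrow> b \<in> I)"

text \<open>A solution with domain I (a partial map Z -> X, represented by a total
  function whose values outside I are irrelevant).\<close>
definition solution :: "'a topology \<Rightarrow> 'a set set \<Rightarrow> int set \<Rightarrow> (int \<Rightarrow> 'a) \<Rightarrow> bool" where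
  "solution X V I g \<longleftrightarrow> int_interval I \<and> (\<forall>t\<in>I. g t \<in> topspace X) \<and>
     (\<forall>t. t \<in> I \<and> t + 1 \<in> I \<longrightarrow> g (t + 1) \<in> Pi_mv X V (g t))"

definition mv_path :: "'a topology \<Rightarrow> 'a set set \<Rightarrow> int \<Rightarrow> int \<Rightarrow> (int \<Rightarrow> 'a) \<Rightarrow> bool" where
  "mv_path X V a b g \<longleftrightarrow> a \<le> b \<and> solution X V {a..b} g"

definition full_solution :: "'a topology \<Rightarrow> 'a set set \<Rightarrow> (int \<Rightarrow> 'a) \<Rightarrow> bool" where
  "full_solution X V g \<longleftrightarrow> solution X V UNIV g"

definition alpha_lim :: "'a topology \<Rightarrow> 'a set set \<Rightarrow> (int \<Rightarrow> 'a) \<Rightarrow> 'a set" where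
  "alpha_lim X V g = lc_hull X V (\<Inter>t\<in>{..0}. g ` {..t})"

definition omega_lim :: "'a topology \<Rightarrow> 'a set set \<Rightarrow> (int \<Rightarrow> 'a) \<Rightarrow> 'a set" where
  "omega_lim X V g = lc_hull X V (\<Inter>t\<in>{0..}. g ` {t..})"

definition essential :: "'a topology \<Rightarrow> 'a set set \<Rightarrow> (int \<Rightarrow> 'a) \<Rightarrow> bool" where
  "essential X V g \<longleftrightarrow> full_solution X V g \<and>
     \<not> (\<exists>A\<in>V. regular X A \<and> alpha_lim X V g \<subseteq> A) \<and>
     \<not> (\<exists>A\<in>V. regular X A \<and> omega_lim X V g \<subseteq> A)"

definition Inv :: "'a topology \<Rightarrow> 'a set set \<Rightarrow> 'a set \<Rightarrow> 'a set" where
  "Inv X V S = {x\<in>S. \<exists>g. essential X V g \<and> range g \<subseteq> S \<and> g 0 = x}"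

definition invariant :: "'a topology \<Rightarrow> 'a set set \<Rightarrow> 'a set \<Rightarrow> bool" where
  "invariant X V S \<longleftrightarrow> Inv X V S = S"

definition isolated_invariant :: "'a topology \<Rightarrow> 'a set set \<Rightarrow> 'a set \<Rightarrow> bool" where
  "isolated_invariant X V S \<longleftrightarrow> S \<subseteq> topspace X \<and> invariant X V S \<and>
     (\<exists>N. closedin X N \<and> (\<Union>x\<in>S. Pi_mv X V x) \<subseteq> N \<and>
        (\<forall>a b g. mv_path X V a b g \<and> g ` {a..b} \<subseteq> N \<and> g a \<in> S \<and> g b \<in> S
                 \<longrightarrow> g ` {a..b} \<subseteq> S))"

definition is_link :: "'a topology \<Rightarrow> 'a set set \<Rightarrow> 'a set \<Rightarrow> 'a set \<Rightarrow> (int \<Rightarrow> 'a) \<Rightarrow> bool" where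
  "is_link X V S1 S2 g \<longleftrightarrow> full_solution X V g \<and>
     alpha_lim X V g \<inter> S1 \<noteq> {} \<and> omega_lim X V g \<inter> S2 \<noteq> {}"

end

theory Submission
  imports Defs
begin

inductive reach :: "'a topology \<Rightarrow> 'a set set \<Rightarrow> 'a \<Rightarrow> 'a \<Rightarrow> bool" for X V where
  refl: "x \<in> topspace X \<Longrightarrow> reach X V x x"
| step: "reach X V x y \<Longrightarrow> z \<in> Pi_mv X V y \<Longrightarrow> z \<in> topspace X \<Longrightarrow> reach X V x z"

lemma reach_top: "reach X V x y \<Longrightarrow> x \<in> topspace X \<and> y \<in> topspace X"
  by (induction rule: reach.induct) auto

lemma reach_trans: "reach X V y z \<Longrightarrow> reach X V x y \<Longrightarrow> reach X V x z"
  by (induction rule: reach.induct) (auto intro: reach.step)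

lemma reach_one: "reach X V x y \<Longrightarrow> z \<in> Pi_mv X V y \<Longrightarrow> z \<in> topspace X \<Longrightarrow> reach X V y z"
  using reach.step[OF reach.refl] reach_top by metis

lemma reach_path:
  assumes "reach X V x y"
  shows "\<exists>n \<rho>. mv_path X V 0 n \<rho> \<and> \<rho> 0 = x \<and> \<rho> n = y"
  using assms
proof (induction rule: reach.induct)
  case (refl x)
  show ?case
    by (rule exI[of _ 0], rule exI[of _ "\<lambda>_. x"])
       (auto simp: mv_path_def solution_def int_interval_def Pi_mv_def refl)
next
  case (step x y z)
  then obtain n \<rho> where p: "mv_path X V 0 n \<rho>" "\<rho> 0 = x" "\<rho> n = y" by blast
  define \<rho>' where "\<rho>' = \<rho>(n+1 := z)"
  have "mv_path X V 0 (n+1) \<rho>'"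
    using p step.hyps unfolding mv_path_def solution_def int_interval_def \<rho>'_def
    by auto
  moreover have "\<rho>' 0 = x" "\<rho>' (n+1) = z" using p by (auto simp: \<rho>'_def mv_path_def)
  ultimately show ?case by blast
qed

lemma sol_reach:
  assumes "full_solution X V g" "s \<le> t"
  shows "reach X V (g s) (g t)"
  using assms(2)
proof (induction t rule: int_ge_induct)
  case base
  have "g s \<in> topspace X" using assms(1) unfolding full_solution_def solution_def by blast
  then show ?case by (rule reach.refl)
next
  case (step i)
  have h: "g (i+1) \<in> Pi_mv X V (g i)" "g (i+1) \<in> topspace X"
    using assms(1) unfolding full_solution_def solution_def by blast+
  show ?case by (rule reach.step[OF step.IH h])
qed

lemma mv_of_props:
  assumes "multivector_field X V" "x \<in> topspace X"
  shows "mv_of V x \<in> V \<and> x \<in> mv_of V x"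
proof -
  have U: "\<Union>V = topspace X" and D: "\<And>A B. A \<in> V \<Longrightarrow> B \<in> V \<Longrightarrow> A \<noteq> B \<Longrightarrow> A \<inter> B = {}"
    using assms(1) unfolding multivector_field_def by auto
  obtain A where A: "A \<in> V" "x \<in> A" using U assms(2) by blast
  have "\<exists>!A. A \<in> V \<and> x \<in> A"
  proof (rule ex1I[of _ A])
    show "A \<in> V \<and> x \<in> A" using A by simp
    fix B assume "B \<in> V \<and> x \<in> B"
    then show "B = A" using D[of B A] A by blast
  qed
  then show ?thesis unfolding mv_of_def by (rule theI')
qed

lemma mvf_disj:
  assumes "multivector_field X V" "A \<in> V" "B \<in> V" "y \<in> A" "y \<in> B"
  shows "A = B"
proof -
  have D: "\<And>A B. A \<in> V \<Longrightarrow> B \<in> V \<Longrightarrow> A \<noteq> B \<Longrightarrow> A \<inter> B = {}"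
    using assms(1) unfolding multivector_field_def by auto
  show ?thesis using D[OF assms(2,3)] assms(4,5) by blast
qed

lemma mvf_sub:
  assumes "multivector_field X V" "A \<in> V"
  shows "A \<subseteq> topspace X"
proof -
  have U: "\<Union>V = topspace X" using assms(1) unfolding multivector_field_def by auto
  show ?thesis using U assms(2) by blast
qed

lemma mv_of_eq:
  assumes "multivector_field X V" "x \<in> topspace X" "y \<in> mv_of V x"
  shows "mv_of V y = mv_of V x"
proof -
  have mx: "mv_of V x \<in> V" using mv_of_props[OF assms(1,2)] by simp
  have y: "y \<in> topspace X" using mvf_sub[OF assms(1) mx] assms(3) by blast
  have my: "mv_of V y \<in> V" "y \<in> mv_of V y" using mv_of_props[OF assms(1) y] by simp_all
  show ?thesis using mvf_disj[OF assms(1) my(1) mx my(2) assms(3)] .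
qed

lemma closure_finite_pt:
  assumes "finite C" "u \<in> X closure_of C"
  shows "\<exists>v\<in>C. u \<in> X closure_of {v}"
proof -
  have "C = \<Union>((\<lambda>v. {v}) ` C)" by blast
  then have "X closure_of C = (\<Union>v\<in>C. X closure_of {v})"
    using closure_of_Union[of "(\<lambda>v. {v}) ` C" X] assms(1) by simp
  then show ?thesis using assms(2) by blast
qed

lemma hull_sub: "A \<subseteq> lc_hull X V A"
  unfolding lc_hull_def by blast

lemma hull_in_R:
  assumes fin: "finite (topspace X)" and mv: "multivector_field X V"
    and z: "z \<in> lc_hull X V A" and At: "A \<subseteq> topspace X"
  shows "\<exists>a\<in>A. \<exists>b\<in>A. reach X V a z \<and> reach X V z b"
proof -
  define R where "R = {z \<in> topspace X. (\<exists>a\<in>A. reach X V a z) \<and> (\<exists>b\<in>A. reach X V z b)}"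
  have AR: "A \<inter> topspace X \<subseteq> R" unfolding R_def using reach.refl by fastforce
  have Rtop: "R \<subseteq> topspace X" unfolding R_def by blast
  have mvR: "mv_of V z \<subseteq> R" if zR: "z \<in> R" for z
  proof
    fix w assume w: "w \<in> mv_of V z"
    have zt: "z \<in> topspace X" using that Rtop by blast
    have wt: "w \<in> topspace X" using mvf_sub[OF mv] mv_of_props[OF mv zt] w by blast
    have zw: "reach X V z w" using reach_one[OF reach.refl[OF zt], of w] w wt by (auto simp: Pi_mv_def)
    have wz: "reach X V w z" using reach_one[OF reach.refl[OF wt], of z] zt
        mv_of_eq[OF mv zt w] mv_of_props[OF mv zt] by (auto simp: Pi_mv_def)
    obtain a b where ab: "a \<in> A" "b \<in> A" "reach X V a z" "reach X V z b" using zR unfolding R_def by blast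
    have "reach X V a w" using reach_trans[OF zw ab(3)] .
    moreover have "reach X V w b" using reach_trans[OF ab(4) wz] .
    ultimately show "w \<in> R" using ab wt unfolding R_def by blast
  qed
  have comp: "compatible V R"
    unfolding compatible_def
  proof (rule exI[of _ "mv_of V ` R"], intro conjI)
    show "mv_of V ` R \<subseteq> V" using mv_of_props[OF mv] Rtop by blast
    have "R \<subseteq> \<Union> (mv_of V ` R)"
    proof
      fix z assume "z \<in> R"
      then have "z \<in> mv_of V z" using mv_of_props[OF mv] Rtop by blast
      then show "z \<in> \<Union> (mv_of V ` R)" using \<open>z \<in> R\<close> by blast
    qed
    moreover have "\<Union> (mv_of V ` R) \<subseteq> R" using mvR by blast
    ultimately show "R = \<Union> (mv_of V ` R)" by (rule subset_antisym)
  qed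
  have cl: "closedin X (X closure_of R - R)"
  proof -
    have "X closure_of (X closure_of R - R) \<subseteq> X closure_of R - R"
    proof
      fix u assume u: "u \<in> X closure_of (X closure_of R - R)"
      have fC: "finite (X closure_of R - R)"
        using fin closure_of_subset_topspace by (metis finite_Diff finite_subset)
      obtain v where v: "v \<in> X closure_of R - R" "u \<in> X closure_of {v}"
        using closure_finite_pt[OF fC u] by blast
      have fR: "finite R" using fin Rtop finite_subset by blast
      obtain r where r: "r \<in> R" "v \<in> X closure_of {r}" using closure_finite_pt[OF fR] v by blast
      have uc: "u \<in> X closure_of R"
        using u closure_of_mono[of "X closure_of R - R" "X closure_of R" X] by auto
      have vt: "v \<in> topspace X" using v closure_of_subset_topspace[of X R] by blast
      have ut: "u \<in> topspace X" using uc closure_of_subset_topspace[of X R] by blast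
      have rt: "r \<in> topspace X" using r Rtop by blast
      have "u \<notin> R"
      proof
        assume uR: "u \<in> R"
        have "reach X V r v" using reach_one[OF reach.refl[OF rt]] r vt by (auto simp: Pi_mv_def)
        note rv = this
        have vu: "reach X V v u" using reach_one[OF reach.refl[OF vt]] v ut by (auto simp: Pi_mv_def)
        obtain a b where ab: "a \<in> A" "b \<in> A" "reach X V a r" "reach X V u b" using r uR unfolding R_def by blast
        have "reach X V a v" using reach_trans[OF rv ab(3)] .
        moreover have "reach X V v b" using reach_trans[OF ab(4) vu] .
        ultimately have "v \<in> R" using ab vt unfolding R_def by blast
        then show False using v by blast
      qed
      then show "u \<in> X closure_of R - R" using uc by blast
    qed
    then show ?thesis using closure_of_subset_eq[of "X closure_of R - R" X] closure_of_subset_topspace[of X R] by blast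
  qed
  have lc: "locally_closed X R" unfolding locally_closed_def using Rtop cl by blast
  have "A \<subseteq> R" using AR At by blast
  then have "z \<in> R" using z lc comp unfolding lc_hull_def by blast
  then show ?thesis unfolding R_def by blast
qed

lemma inf_past:
  fixes f :: "int \<Rightarrow> 'a"
  assumes "finite (f ` {..0})"
  shows "\<exists>x. \<forall>t\<le>0. x \<in> f ` {..t}"
proof (rule ccontr)
  assume "\<not> ?thesis"
  then have "\<forall>x. \<exists>t. t \<le> 0 \<and> x \<notin> f ` {..t}" by auto
  then obtain T where T: "\<And>x. T x \<le> 0 \<and> x \<notin> f ` {..T x}" by metis
  define F where "F = f ` {..0}"
  have fF: "finite (T ` F)" using assms F_def by simp
  have ne: "T ` F \<noteq> {}" unfolding F_def by simp
  define m where "m = Min (T ` F)"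
  have "m \<in> T ` F" using Min_in[OF fF ne] m_def by simp
  then have m0: "m \<le> 0" using T by auto
  then have fm: "f m \<in> F" unfolding F_def by simp
  then have "m \<le> T (f m)" using Min_le[OF fF] m_def by simp
  then have "f m \<in> f ` {..T (f m)}" by simp
  then show False using T by blast
qed

lemma inf_future:
  fixes f :: "int \<Rightarrow> 'a"
  assumes "finite (f ` {0..})"
  shows "\<exists>x. \<forall>t\<ge>0. x \<in> f ` {t..}"
proof (rule ccontr)
  assume "\<not> ?thesis"
  then have "\<forall>x. \<exists>t. t \<ge> 0 \<and> x \<notin> f ` {t..}" by auto
  then obtain T where T: "\<And>x. T x \<ge> 0 \<and> x \<notin> f ` {T x..}" by metis
  define F where "F = f ` {0..}"
  have fF: "finite (T ` F)" using assms F_def by simp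
  have ne: "T ` F \<noteq> {}" unfolding F_def by simp
  define m where "m = Max (T ` F)"
  have "m \<in> T ` F" using Max_in[OF fF ne] m_def by simp
  then have m0: "m \<ge> 0" using T by auto
  then have fm: "f m \<in> F" unfolding F_def by simp
  then have "m \<ge> T (f m)" using Max_ge[OF fF] m_def by simp
  then have "f m \<in> f ` {T (f m)..}" by simp
  then show False using T by blast
qed

lemma link_to_path:
  assumes fin: "finite (topspace X)" and mv: "multivector_field X V"
    and g: "is_link X V S1 S2 g"
  shows "\<exists>a b \<rho>. mv_path X V a b \<rho> \<and> \<rho> a \<in> S1 \<and> \<rho> b \<in> S2"
proof -
  have fs: "full_solution X V g" using g unfolding is_link_def by blast
  have gt: "\<And>t. g t \<in> topspace X" using fs unfolding full_solution_def solution_def by blast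
  define A where "A = (\<Inter>t\<in>{..0}. g ` {..t})"
  define B where "B = (\<Inter>t\<in>{0..}. g ` {t..})"
  obtain x where x: "x \<in> lc_hull X V A" "x \<in> S1"
    using g unfolding is_link_def alpha_lim_def A_def by blast
  obtain y where y: "y \<in> lc_hull X V B" "y \<in> S2"
    using g unfolding is_link_def omega_lim_def B_def by blast
  have At: "A \<subseteq> topspace X" unfolding A_def using gt by blast
  have Bt: "B \<subseteq> topspace X" unfolding B_def using gt by blast
  obtain a where a: "a \<in> A" "reach X V x a" using hull_in_R[OF fin mv x(1) At] by blast
  obtain b where b: "b \<in> B" "reach X V b y" using hull_in_R[OF fin mv y(1) Bt] by blast
  obtain s where s: "s \<le> 0" "a = g s" using a(1) unfolding A_def by auto
  obtain t where t: "t \<ge> 0" "b = g t" using b(1) unfolding B_def by auto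
  have "reach X V a b" using sol_reach[OF fs, of s t] s t by simp
  then have "reach X V x y" using reach_trans[OF reach_trans[OF b(2)] a(2)] by blast
  then obtain n \<rho> where r: "mv_path X V 0 n \<rho>" "\<rho> 0 = x" "\<rho> n = y" using reach_path[of X V x y] by blast
  have "mv_path X V 0 n \<rho> \<and> \<rho> 0 \<in> S1 \<and> \<rho> n \<in> S2" using r x(2) y(2) by simp
  then show ?thesis by blast
qed

lemma sol_from_inv:
  assumes "invariant X V S" "x \<in> S"
  shows "\<exists>g. full_solution X V g \<and> range g \<subseteq> S \<and> g 0 = x"
  using assms unfolding invariant_def Inv_def essential_def by blast

lemma path_to_link:
  assumes fin: "finite (topspace X)"
    and i1: "isolated_invariant X V S1" and i2: "isolated_invariant X V S2"
    and p: "mv_path X V a b \<rho>" "\<rho> a \<in> S1" "\<rho> b \<in> S2"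
  shows "\<exists>g. is_link X V S1 S2 g"
proof -
  have S1t: "S1 \<subseteq> topspace X" and inv1: "invariant X V S1" using i1 unfolding isolated_invariant_def by auto
  have S2t: "S2 \<subseteq> topspace X" and inv2: "invariant X V S2" using i2 unfolding isolated_invariant_def by auto
  obtain g1 where g1: "full_solution X V g1" "range g1 \<subseteq> S1" "g1 0 = \<rho> a"
    using sol_from_inv[OF inv1 p(2)] by blast
  obtain g2 where g2: "full_solution X V g2" "range g2 \<subseteq> S2" "g2 0 = \<rho> b"
    using sol_from_inv[OF inv2 p(3)] by blast
  define n where "n = b - a"
  have n0: "n \<ge> 0" using p(1) unfolding mv_path_def n_def by simp
  have ps: "\<And>t. t \<in> {a..b} \<Longrightarrow> \<rho> t \<in> topspace X"
    "\<And>t. t \<in> {a..b} \<Longrightarrow> t + 1 \<in> {a..b} \<Longrightarrow> \<rho> (t + 1) \<in> Pi_mv X V (\<rho> t)"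
    using p(1) unfolding mv_path_def solution_def by auto
  define \<gamma> where "\<gamma> t = (if t \<le> 0 then g1 t else if t \<le> n then \<rho> (a + t) else g2 (t - n))" for t
  have c1: "\<gamma> t = g1 t" if "t \<le> 0" for t using that \<gamma>_def by simp
  have c2: "\<gamma> t = \<rho> (a + t)" if "0 \<le> t" "t \<le> n" for t
    using that g1(3) unfolding \<gamma>_def by auto
  have c3: "\<gamma> t = g2 (t - n)" if "n \<le> t" for t
  proof (cases "t = n")
    case True
    show ?thesis
    proof (cases "n = 0")
      case True
      then have "a = b" using n_def by simp
      then show ?thesis using True \<open>t = n\<close> g1(3) g2(3) unfolding \<gamma>_def by simp
    next
      case False
      then show ?thesis using \<open>t = n\<close> n0 g2(3) n_def unfolding \<gamma>_def by simp
    qed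
  next
    case False
    then show ?thesis using that n0 unfolding \<gamma>_def by auto
  qed
  have g1s: "\<And>t. g1 t \<in> topspace X" "\<And>t. g1 (t+1) \<in> Pi_mv X V (g1 t)"
    using g1(1) unfolding full_solution_def solution_def by auto
  have g2s: "\<And>t. g2 t \<in> topspace X" "\<And>t. g2 (t+1) \<in> Pi_mv X V (g2 t)"
    using g2(1) unfolding full_solution_def solution_def by auto
  have top: "\<gamma> t \<in> topspace X" for t
  proof -
    consider "t \<le> 0" | "0 \<le> t \<and> t \<le> n" | "n \<le> t" by linarith
    then show ?thesis
    proof cases
      case 1 then show ?thesis using c1 g1s by simp
    next
      case 2 then show ?thesis using c2[of t] ps(1)[of "a+t"] n_def by simp
    next
      case 3 then show ?thesis using c3 g2s by simp
    qed
  qed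
  have stp: "\<gamma> (t+1) \<in> Pi_mv X V (\<gamma> t)" for t
  proof -
    consider "t < 0" | "0 \<le> t \<and> t < n" | "n \<le> t" by linarith
    then show ?thesis
    proof cases
      case 1 then show ?thesis using c1[of t] c1[of "t+1"] g1s by simp
    next
      case 2 then show ?thesis using c2[of t] c2[of "t+1"] ps(2)[of "a+t"] n_def by (simp add: add.assoc)
    next
      case 3 then show ?thesis using c3[of t] c3[of "t+1"] g2s(2)[of "t-n"] by (simp add: algebra_simps)
    qed
  qed
  have fs: "full_solution X V \<gamma>"
    unfolding full_solution_def solution_def int_interval_def using top stp by blast
  have fin1: "finite (g1 ` {..0})" using fin g1s(1) finite_subset by (metis image_subset_iff)
  obtain x where x: "\<forall>t\<le>0. x \<in> g1 ` {..t}" using inf_past[OF fin1] by blast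
  have xS: "x \<in> S1" using x g1(2) by fastforce
  have "x \<in> (\<Inter>t\<in>{..0}. \<gamma> ` {..t})"
  proof
    fix t :: int assume "t \<in> {..0}"
    then have "x \<in> g1 ` {..t}" using x by simp
    moreover have "g1 ` {..t} = \<gamma> ` {..t}" using c1 \<open>t \<in> {..0}\<close> by (intro image_cong) auto
    ultimately show "x \<in> \<gamma> ` {..t}" by simp
  qed
  then have "x \<in> alpha_lim X V \<gamma>" unfolding alpha_lim_def using hull_sub[of "\<Inter>t\<in>{..0}. \<gamma> ` {..t}" X V] by (rule_tac subsetD)
  then have al: "alpha_lim X V \<gamma> \<inter> S1 \<noteq> {}" using xS by blast
  have fin2: "finite (g2 ` {0..})" using fin g2s(1) finite_subset by (metis image_subset_iff)
  obtain y where y: "\<forall>t\<ge>0. y \<in> g2 ` {t..}" using inf_future[OF fin2] by blast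
  have yS: "y \<in> S2" using y g2(2) by fastforce
  have "y \<in> (\<Inter>t\<in>{0..}. \<gamma> ` {t..})"
  proof
    fix t :: int assume t: "t \<in> {0..}"
    then obtain s where s: "s \<ge> t" "y = g2 s" using y by auto
    have "\<gamma> (s + n) = g2 s" using c3[of "s+n"] s t by simp
    moreover have "s + n \<in> {t..}" using s n0 by simp
    ultimately show "y \<in> \<gamma> ` {t..}" using s by (metis image_eqI)
  qed
  then have "y \<in> omega_lim X V \<gamma>" unfolding omega_lim_def using hull_sub[of "\<Inter>t\<in>{0..}. \<gamma> ` {t..}" X V] by (rule_tac subsetD)
  then have om: "omega_lim X V \<gamma> \<inter> S2 \<noteq> {}" using yS by blast
  show ?thesis using fs al om unfolding is_link_def by blast
qed

theorem proposition4p2: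
  fixes X :: "'a topology" and V :: "'a set set" and S1 S2 :: "'a set"
  assumes "finite (topspace X)" and "t0_space X"
    and "multivector_field X V"
    and "invariant X V (topspace X)"
    and "isolated_invariant X V S1" and "isolated_invariant X V S2"
  shows "(\<exists>g. is_link X V S1 S2 g) \<longleftrightarrow>
         (\<exists>a b \<rho>. mv_path X V a b \<rho> \<and> \<rho> a \<in> S1 \<and> \<rho> b \<in> S2)"
  using link_to_path[OF assms(1,3)] path_to_link[OF assms(1,5,6)] by blast

end
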